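(* Assume the standing setting. Then every vertex of $G$ is incident with at most one nonremovable edge of type I and with at most two nonremovable edges of type II.
   Context: Graphs may have multiple edges but no loops. An edge is admissible if it lies in some perfect matching; a connected graph with at least two vertices is matching covered if every edge is admissible; an edge $e$ of a matching covered graph $G$ is removable if $G-e$ is matching covered, and nonremovable otherwise. A brick is a 3-connected nonbipartite graph $G$ such that $G-x-y$ has a perfect matching for all distinct $x,y$. A nonbipartite matching covered graph $G$ is near-bipartite if it has a pair of edges $\{e_1,e_2\}$ (a removable doubleton) such that $G-\{e_1,e_2\}$ is bipartite matching covered. Standing setting: $G$ is a near-bipartite brick with removable doubleton $\{e_1,e_2\}$, $H=G-\{e_1,e_2\}$, and $(U,W)$ is the bipartition of $H$, labelled so that both ends of $e_1$ lie in $U$ and both ends of $e_2$ lie in $W$. A nonremovable edge $e\notin\{e_1,e_2\}$ of $G$ is of type I if $e$ is removable in $H$, and of type II if $e$ is nonremovable in $H$. *)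

theory Defs
  imports Main
begin

text \<open>Parallel edges are distinct identifiers with the same ends.\<close>

definition is_graph :: "'v set \<Rightarrow> 'e set \<Rightarrow> ('e \<Rightarrow> 'v set) \<Rightarrow> bool" where
  "is_graph V E ends \<longleftrightarrow> finite V \<and> finite E \<and>
     (\<forall>e\<in>E. ends e \<subseteq> V \<and> card (ends e) = 2)"

definition perfect_matching :: "'v set \<Rightarrow> 'e set \<Rightarrow> ('e \<Rightarrow> 'v set) \<Rightarrow> 'e set \<Rightarrow> bool" where
  "perfect_matching V E ends M \<longleftrightarrow> M \<subseteq> E \<and> (\<forall>v\<in>V. \<exists>!e. e \<in> M \<and> v \<in> ends e)"

definition admissible :: "'v set \<Rightarrow> 'e set \<Rightarrow> ('e \<Rightarrow> 'v set) \<Rightarrow> 'e \<Rightarrow> bool" where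
  "admissible V E ends e \<longleftrightarrow> (\<exists>M. perfect_matching V E ends M \<and> e \<in> M)"

definition adj_rel :: "'e set \<Rightarrow> ('e \<Rightarrow> 'v set) \<Rightarrow> ('v \<times> 'v) set" where
  "adj_rel E ends = {(u, v). \<exists>e\<in>E. ends e = {u, v}}"

definition connected_graph :: "'v set \<Rightarrow> 'e set \<Rightarrow> ('e \<Rightarrow> 'v set) \<Rightarrow> bool" where
  "connected_graph V E ends \<longleftrightarrow> (\<forall>u\<in>V. \<forall>v\<in>V. (u, v) \<in> (adj_rel E ends)\<^sup>*)"

definition matching_covered :: "'v set \<Rightarrow> 'e set \<Rightarrow> ('e \<Rightarrow> 'v set) \<Rightarrow> bool" where
  "matching_covered V E ends \<longleftrightarrow> connected_graph V E ends \<and> card V \<ge> 2 \<and>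
     (\<forall>e\<in>E. admissible V E ends e)"

definition removable :: "'v set \<Rightarrow> 'e set \<Rightarrow> ('e \<Rightarrow> 'v set) \<Rightarrow> 'e \<Rightarrow> bool" where
  "removable V E ends e \<longleftrightarrow> e \<in> E \<and> matching_covered V (E - {e}) ends"

definition nonremovable :: "'v set \<Rightarrow> 'e set \<Rightarrow> ('e \<Rightarrow> 'v set) \<Rightarrow> 'e \<Rightarrow> bool" where
  "nonremovable V E ends e \<longleftrightarrow> e \<in> E \<and> \<not> matching_covered V (E - {e}) ends"

definition is_bipartition :: "'v set \<Rightarrow> 'e set \<Rightarrow> ('e \<Rightarrow> 'v set) \<Rightarrow> 'v set \<Rightarrow> 'v set \<Rightarrow> bool" where
  "is_bipartition V E ends U W \<longleftrightarrow> U \<union> W = V \<and> U \<inter> W = {} \<and>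
     (\<forall>e\<in>E. card (ends e \<inter> U) = 1 \<and> card (ends e \<inter> W) = 1)"

definition bipartite :: "'v set \<Rightarrow> 'e set \<Rightarrow> ('e \<Rightarrow> 'v set) \<Rightarrow> bool" where
  "bipartite V E ends \<longleftrightarrow> (\<exists>U W. is_bipartition V E ends U W)"

definition del_edges :: "'e set \<Rightarrow> ('e \<Rightarrow> 'v set) \<Rightarrow> 'v set \<Rightarrow> 'e set" where
  "del_edges E ends X = {e \<in> E. ends e \<inter> X = {}}"

definition three_connected :: "'v set \<Rightarrow> 'e set \<Rightarrow> ('e \<Rightarrow> 'v set) \<Rightarrow> bool" where
  "three_connected V E ends \<longleftrightarrow> card V > 3 \<and>
     (\<forall>X. X \<subseteq> V \<longrightarrow> card X < 3 \<longrightarrow> connected_graph (V - X) (del_edges E ends X) ends)"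

definition brick :: "'v set \<Rightarrow> 'e set \<Rightarrow> ('e \<Rightarrow> 'v set) \<Rightarrow> bool" where
  "brick V E ends \<longleftrightarrow> three_connected V E ends \<and> \<not> bipartite V E ends \<and>
     (\<forall>x\<in>V. \<forall>y\<in>V. x \<noteq> y \<longrightarrow>
        (\<exists>M. perfect_matching (V - {x, y}) (del_edges E ends {x, y}) ends M))"

end

theory Submission
  imports Defs
begin



lemma hall_aux:
  fixes N :: "'a \<Rightarrow> 'b set"
  assumes "finite A" "\<forall>a\<in>A. finite (N a)" "\<forall>S\<subseteq>A. card S \<le> card (\<Union>(N ` S))"
  shows "\<exists>f. inj_on f A \<and> (\<forall>a\<in>A. f a \<in> N a)"
  using assms
proof (induction "card A" arbitrary: A N rule: less_induct)
  case less
  note fin = less.prems(1) and finN = less.prems(2) and hc = less.prems(3)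
  show ?case
  proof (cases "A = {}")
    case True then show ?thesis by auto
  next
    case Ane: False
    show ?thesis
    proof (cases "\<exists>S. S \<subseteq> A \<and> S \<noteq> {} \<and> S \<noteq> A \<and> card (\<Union>(N ` S)) = card S")
      case True
      then obtain S where S: "S \<subseteq> A" "S \<noteq> {}" "S \<noteq> A" "card (\<Union>(N ` S)) = card S" by blast
      have finS: "finite S" using S fin finite_subset by blast
      have "card S < card A" using S fin by (meson psubsetI psubset_card_mono)
      moreover have "\<forall>S'\<subseteq>S. card S' \<le> card (\<Union>(N ` S'))" using hc S by auto
      ultimately obtain f1 where f1: "inj_on f1 S" "\<forall>a\<in>S. f1 a \<in> N a"
        using less.hyps[of S N] finS finN S by auto
      define R where "R = \<Union>(N ` S)"
      have finR: "finite R" unfolding R_def using finS finN S by auto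
      define N2 where "N2 = (\<lambda>a. N a - R)"
      have "card (A - S) < card A" using S fin
      proof -
        have "card (A - S) = card A - card S" using S finS by (simp add: card_Diff_subset)
        moreover have "card S > 0" using S finS by (simp add: card_gt_0_iff)
        moreover have "card S \<le> card A" using S fin card_mono by blast
        ultimately show ?thesis by linarith
      qed
      moreover have "\<forall>T\<subseteq>A - S. card T \<le> card (\<Union>(N2 ` T))"
      proof (intro allI impI)
        fix T assume T: "T \<subseteq> A - S"
        have finT: "finite T" using T fin finite_subset by blast
        have u: "\<Union>(N ` (T \<union> S)) = \<Union>(N2 ` T) \<union> R" unfolding N2_def R_def by auto
        have d: "\<Union>(N2 ` T) \<inter> R = {}" unfolding N2_def by auto
        have fU: "finite (\<Union>(N2 ` T))" unfolding N2_def using finT finN T by auto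
        have "T \<union> S \<subseteq> A" using T S by auto
        then have "card (T \<union> S) \<le> card (\<Union>(N ` (T \<union> S)))" using hc by blast
        also have "\<dots> = card (\<Union>(N2 ` T)) + card R" using u d fU finR card_Un_disjoint by metis
        finally have "card (T \<union> S) \<le> card (\<Union>(N2 ` T)) + card R" .
        moreover have "card (T \<union> S) = card T + card S" using T finT finS by (intro card_Un_disjoint) auto
        ultimately show "card T \<le> card (\<Union>(N2 ` T))" using S(4) unfolding R_def by simp
      qed
      moreover have "finite (A - S)" using fin by auto
      moreover have "\<forall>a\<in>A - S. finite (N2 a)" using finN unfolding N2_def by auto
      ultimately obtain f2 where f2: "inj_on f2 (A - S)" "\<forall>a\<in>A - S. f2 a \<in> N2 a"
        using less.hyps[of "A - S" N2] by blast
      define f where "f = (\<lambda>a. if a \<in> S then f1 a else f2 a)"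
      have "inj_on f A"
      proof (rule inj_onI)
        fix x y assume xy: "x \<in> A" "y \<in> A" "f x = f y"
        show "x = y"
        proof (cases "x \<in> S"; cases "y \<in> S")
          assume "x \<in> S" "y \<in> S" then show ?thesis using xy f1 unfolding f_def by (auto dest: inj_onD)
        next
          assume "x \<notin> S" "y \<notin> S" then show ?thesis using xy f2 unfolding f_def by (auto dest: inj_onD)
        next
          assume a: "x \<in> S" "y \<notin> S"
          then have "f x \<in> R" using f1 unfolding f_def R_def by auto
          moreover have "f y \<notin> R" using a xy f2 unfolding f_def N2_def by auto
          ultimately show ?thesis using xy by simp
        next
          assume a: "x \<notin> S" "y \<in> S"
          then have "f y \<in> R" using f1 unfolding f_def R_def by auto
          moreover have "f x \<notin> R" using a xy f2 unfolding f_def N2_def by (metis DiffD2 DiffI)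
          ultimately show ?thesis using xy by simp
        qed
      qed
      moreover have "\<forall>a\<in>A. f a \<in> N a" using f1 f2 unfolding f_def N2_def by auto
      ultimately show ?thesis by blast
    next
      case False
      then have strict: "\<forall>S. S \<subseteq> A \<longrightarrow> S \<noteq> {} \<longrightarrow> S \<noteq> A \<longrightarrow> card S < card (\<Union>(N ` S))"
        using hc by (metis le_neq_implies_less)
      obtain a where a: "a \<in> A" using Ane by blast
      have "card {a} \<le> card (N a)" using hc[rule_format, of "{a}"] a by simp
      then obtain b where b: "b \<in> N a" by (metis card.empty card_1_singleton_iff ex_in_conv le_zero_eq nat.simps(3) One_nat_def)
      define N' where "N' = (\<lambda>x. N x - {b})"
      have "card (A - {a}) < card A" using a fin by (meson card_Diff1_less)
      moreover have "\<forall>T\<subseteq>A - {a}. card T \<le> card (\<Union>(N' ` T))"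
      proof (intro allI impI)
        fix T assume T: "T \<subseteq> A - {a}"
        show "card T \<le> card (\<Union>(N' ` T))"
        proof (cases "T = {}")
          case True then show ?thesis by simp
        next
          case False
          have finT: "finite T" using T fin finite_subset by blast
          have "T \<noteq> A" using T a by auto
          then have lt: "card T < card (\<Union>(N ` T))" using strict False T by auto
          have eq: "\<Union>(N' ` T) = \<Union>(N ` T) - {b}" unfolding N'_def by auto
          have "card (\<Union>(N ` T)) - 1 \<le> card (\<Union>(N ` T) - {b})" using diff_card_le_card_Diff[of "{b}" "\<Union>(N ` T)"] by simp
          then show ?thesis using lt eq by simp
        qed
      qed
      moreover have "finite (A - {a})" using fin by auto
      moreover have "\<forall>x\<in>A - {a}. finite (N' x)" using finN unfolding N'_def by auto
      ultimately obtain f' where f': "inj_on f' (A - {a})" "\<forall>x\<in>A - {a}. f' x \<in> N' x"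
        using less.hyps[of "A - {a}" N'] by blast
      define f where "f = f'(a := b)"
      have "inj_on f A"
      proof (rule inj_onI)
        fix x y assume xy: "x \<in> A" "y \<in> A" "f x = f y"
        show "x = y"
          using xy f' unfolding f_def N'_def
          by (cases "x = a"; cases "y = a") (auto dest: inj_onD)
      qed
      moreover have "\<forall>x\<in>A. f x \<in> N x" using f' b unfolding f_def N'_def by auto
      ultimately show ?thesis by blast
    qed
  qed
qed




definition eat :: "'e set \<Rightarrow> ('e \<Rightarrow> 'v set) \<Rightarrow> 'v \<Rightarrow> 'e" where
  "eat M ends z = (THE e. e \<in> M \<and> z \<in> ends e)"

definition mate :: "'e set \<Rightarrow> ('e \<Rightarrow> 'v set) \<Rightarrow> 'v \<Rightarrow> 'v" where
  "mate M ends z = (THE u. u \<in> ends (eat M ends z) \<and> u \<noteq> z)"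

lemma pm_eat:
  assumes "perfect_matching V' F ends M" "z \<in> V'"
  shows "eat M ends z \<in> M \<and> z \<in> ends (eat M ends z)"
proof -
  have "\<exists>!e. e \<in> M \<and> z \<in> ends e" using assms unfolding perfect_matching_def by blast
  then show ?thesis unfolding eat_def by (rule theI')
qed

lemma pm_eat_eq:
  assumes "perfect_matching V' F ends M" "z \<in> V'" "e \<in> M" "z \<in> ends e"
  shows "eat M ends z = e"
proof -
  have "\<exists>!e. e \<in> M \<and> z \<in> ends e" using assms unfolding perfect_matching_def by blast
  then show ?thesis using assms pm_eat[OF assms(1,2)] by blast
qed

lemma pm_mate:
  assumes "perfect_matching V' F ends M" "\<forall>e\<in>F. card (ends e) = 2 \<and> ends e \<subseteq> V'" "z \<in> V'"
  shows "ends (eat M ends z) = {z, mate M ends z} \<and> mate M ends z \<noteq> z \<and> mate M ends z \<in> V'"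
proof -
  have e: "eat M ends z \<in> M" "z \<in> ends (eat M ends z)" using pm_eat[OF assms(1,3)] by auto
  have "eat M ends z \<in> F" using e assms(1) unfolding perfect_matching_def by auto
  then have c: "card (ends (eat M ends z)) = 2" "ends (eat M ends z) \<subseteq> V'" using assms(2) by auto
  then obtain p q where pq: "ends (eat M ends z) = {p, q}" "p \<noteq> q" by (meson card_2_iff)
  obtain u where u: "ends (eat M ends z) = {z, u}" "u \<noteq> z" using pq e(2) by auto
  have "mate M ends z = u" unfolding mate_def using u by (auto intro!: the_equality)
  then show ?thesis using u c by auto
qed

lemma pm_eat_mate:
  assumes "perfect_matching V' F ends M" "\<forall>e\<in>F. card (ends e) = 2 \<and> ends e \<subseteq> V'" "z \<in> V'"
  shows "eat M ends (mate M ends z) = eat M ends z"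
  using pm_mate[OF assms] pm_eat[OF assms(1,3)] by (intro pm_eat_eq[OF assms(1)]) auto

lemma pm_mate_inj:
  assumes "perfect_matching V' F ends M" "\<forall>e\<in>F. card (ends e) = 2 \<and> ends e \<subseteq> V'"
  shows "inj_on (mate M ends) V'"
proof (rule inj_onI)
  fix x y assume xy: "x \<in> V'" "y \<in> V'" "mate M ends x = mate M ends y"
  have "eat M ends x = eat M ends y"
    using pm_eat_mate[OF assms xy(1)] pm_eat_mate[OF assms xy(2)] xy(3) by simp
  moreover have "ends (eat M ends x) = {x, mate M ends x}" "mate M ends x \<noteq> x"
    using pm_mate[OF assms xy(1)] by auto
  moreover have "ends (eat M ends y) = {y, mate M ends y}" "mate M ends y \<noteq> y"
    using pm_mate[OF assms xy(2)] by auto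
  ultimately have "x \<in> {y, mate M ends y}" using xy(3) pm_eat[OF assms(1) xy(1)] by simp
  then show "x = y" using xy(3) \<open>mate M ends x \<noteq> x\<close> by auto
qed

lemma pm_mono: "perfect_matching V' F ends M \<Longrightarrow> F \<subseteq> F' \<Longrightarrow> perfect_matching V' F' ends M"
  unfolding perfect_matching_def by blast

lemma cross:
  assumes "(s, t) \<in> (adj_rel F ends)\<^sup>*" "s \<in> X" "t \<notin> X"
  shows "\<exists>e\<in>F. \<exists>p q. ends e = {p, q} \<and> p \<in> X \<and> q \<notin> X"
  using assms
proof (induction rule: rtrancl_induct)
  case base then show ?case by simp
next
  case (step y z)
  show ?case
  proof (cases "y \<in> X")
    case True
    from step(2) obtain e where "e \<in> F" "ends e = {y, z}" unfolding adj_rel_def by blast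
    then show ?thesis using True step(5) by blast
  next
    case False
    with step show ?thesis by blast
  qed
qed

lemma adj_sym: "sym (adj_rel F ends)"
proof (rule symI)
  fix x y assume "(x, y) \<in> adj_rel F ends"
  then obtain e where "e \<in> F" "ends e = {x, y}" unfolding adj_rel_def by blast
  then have "ends e = {y, x}" by (simp add: insert_commute)
  then show "(y, x) \<in> adj_rel F ends" unfolding adj_rel_def using \<open>e \<in> F\<close> by blast
qed

lemma adj_mono: "F \<subseteq> F' \<Longrightarrow> adj_rel F ends \<subseteq> adj_rel F' ends"
  unfolding adj_rel_def by auto

lemma conn_mono: "connected_graph V' F ends \<Longrightarrow> F \<subseteq> F' \<Longrightarrow> connected_graph V' F' ends"
proof -
  assume a: "connected_graph V' F ends" "F \<subseteq> F'"
  have "(adj_rel F ends)\<^sup>* \<subseteq> (adj_rel F' ends)\<^sup>*" using adj_mono[OF a(2)] by (rule rtrancl_mono)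
  then show ?thesis using a(1) unfolding connected_graph_def by blast
qed

lemma card2_obtain:
  assumes "card S = 2" obtains p q where "S = {p, q}" "p \<noteq> q"
  using assms by (meson card_2_iff)




locale nb =
  fixes V :: "'v set" and E :: "'e set" and ends :: "'e \<Rightarrow> 'v set"
    and e1 e2 :: 'e and U W :: "'v set"
  assumes graph: "is_graph V E ends"
    and brick: "brick V E ends"
    and e1: "e1 \<in> E" and e2: "e2 \<in> E" and ne: "e1 \<noteq> e2"
    and H_mc: "matching_covered V (E - {e1, e2}) ends"
    and H_bip: "is_bipartition V (E - {e1, e2}) ends U W"
    and e1U: "ends e1 \<subseteq> U" and e2W: "ends e2 \<subseteq> W"
begin

lemma finV: "finite V" and finE: "finite E" using graph unfolding is_graph_def by auto
lemma UW: "U \<union> W = V" "U \<inter> W = {}" using H_bip unfolding is_bipartition_def by auto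
lemma finU: "finite U" and finW: "finite W" using UW finV by (metis finite_Un)+
lemma Eedges: "\<forall>e\<in>E. card (ends e) = 2 \<and> ends e \<subseteq> V" using graph unfolding is_graph_def by auto
lemma Fedges: "F \<subseteq> E \<Longrightarrow> \<forall>e\<in>F. card (ends e) = 2 \<and> ends e \<subseteq> V" using Eedges by auto

lemma Hside:
  assumes "f \<in> E - {e1, e2}" "ends f = {p, q}" "p \<in> U"
  shows "q \<in> W"
proof -
  have c: "card (ends f \<inter> U) = 1" "card (ends f) = 2" "ends f \<subseteq> V"
    using assms(1) H_bip Eedges unfolding is_bipartition_def by auto
  have "p \<noteq> q" using c(2) assms(2) by auto
  have "q \<notin> U"
  proof
    assume "q \<in> U"
    then have "ends f \<inter> U = {p, q}" using assms by auto
    then show False using c(1) \<open>p \<noteq> q\<close> by simp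
  qed
  moreover have "q \<in> V" using c(3) assms(2) by auto
  ultimately show ?thesis using UW by auto
qed

lemma Hside':
  assumes "f \<in> E - {e1, e2}" "ends f = {p, q}" "p \<in> W"
  shows "q \<in> U"
proof -
  have c: "card (ends f \<inter> W) = 1" "card (ends f) = 2" "ends f \<subseteq> V"
    using assms(1) H_bip Eedges unfolding is_bipartition_def by auto
  have "p \<noteq> q" using c(2) assms(2) by auto
  have "q \<notin> W"
  proof
    assume "q \<in> W"
    then have "ends f \<inter> W = {p, q}" using assms by auto
    then show False using c(1) \<open>p \<noteq> q\<close> by simp
  qed
  moreover have "q \<in> V" using c(3) assms(2) by auto
  ultimately show ?thesis using UW by auto
qed

lemma cardV2: "card V \<ge> 2" using H_mc unfolding matching_covered_def by auto

lemma H_pm: "\<exists>M. perfect_matching V (E - {e1, e2}) ends M"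
proof -
  obtain s t where st: "s \<in> V" "t \<in> V" "s \<noteq> t" using cardV2
    by (metis card_2_iff' card_le_Suc0_iff_eq finV not_less_eq_eq numeral_2_eq_2)
  have "(s, t) \<in> (adj_rel (E - {e1, e2}) ends)\<^sup>*" using H_mc st unfolding matching_covered_def connected_graph_def by auto
  then obtain f where "f \<in> E - {e1, e2}" using cross[of s t _ ends "{s}"] st by auto
  then show ?thesis using H_mc unfolding matching_covered_def admissible_def by blast
qed

lemma cardUW: "card U = card W"
proof -
  obtain M where M: "perfect_matching V (E - {e1, e2}) ends M" using H_pm by blast
  have F: "\<forall>e\<in>E - {e1, e2}. card (ends e) = 2 \<and> ends e \<subseteq> V" using Fedges by blast
  have inj: "inj_on (mate M ends) V" using pm_mate_inj[OF M F] .
  have MH: "M \<subseteq> E - {e1, e2}" using M unfolding perfect_matching_def by auto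
  have "mate M ends ` U \<subseteq> W"
  proof
    fix y assume "y \<in> mate M ends ` U"
    then obtain z where z: "z \<in> U" "y = mate M ends z" by blast
    have zV: "z \<in> V" using z UW by auto
    have "ends (eat M ends z) = {z, mate M ends z}" using pm_mate[OF M F zV] by auto
    moreover have "eat M ends z \<in> E - {e1, e2}" using pm_eat[OF M zV] MH by auto
    ultimately show "y \<in> W" using Hside z by blast
  qed
  moreover have "mate M ends ` W \<subseteq> U"
  proof
    fix y assume "y \<in> mate M ends ` W"
    then obtain z where z: "z \<in> W" "y = mate M ends z" by blast
    have zV: "z \<in> V" using z UW by auto
    have "ends (eat M ends z) = {z, mate M ends z}" using pm_mate[OF M F zV] by auto
    moreover have "eat M ends z \<in> E - {e1, e2}" using pm_eat[OF M zV] MH by auto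
    ultimately show "y \<in> U" using Hside' z by blast
  qed
  moreover have "inj_on (mate M ends) U" "inj_on (mate M ends) W" using inj UW by (auto intro: inj_on_subset)
  ultimately have "card U \<le> card W" "card W \<le> card U" using finU finW by (auto intro: card_inj_on_le)
  then show ?thesis by simp
qed

lemma brick_adm:
  assumes "e \<in> E" shows "\<exists>M. perfect_matching V E ends M \<and> e \<in> M"
proof -
  obtain x y where xy: "ends e = {x, y}" "x \<noteq> y" using Eedges assms by (meson card2_obtain)
  have xyV: "x \<in> V" "y \<in> V" using Eedges assms xy by auto
  obtain M where M: "perfect_matching (V - {x, y}) (del_edges E ends {x, y}) ends M"
    using brick xy xyV unfolding brick_def by blast
  have MS: "M \<subseteq> E" "\<forall>f\<in>M. ends f \<inter> {x, y} = {}" using M unfolding perfect_matching_def del_edges_def by auto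
  have "e \<notin> M" using MS(2) xy by auto
  have "perfect_matching V E ends (insert e M)"
    unfolding perfect_matching_def
  proof (intro conjI ballI)
    show "insert e M \<subseteq> E" using MS assms by auto
  next
    fix z assume z: "z \<in> V"
    show "\<exists>!f. f \<in> insert e M \<and> z \<in> ends f"
    proof (cases "z \<in> {x, y}")
      case True
      then show ?thesis using xy MS(2) by (intro ex1I[of _ e]) auto
    next
      case False
      then have "\<exists>!f. f \<in> M \<and> z \<in> ends f" using M z unfolding perfect_matching_def by auto
      then show ?thesis using False xy by auto
    qed
  qed
  then show ?thesis by blast
qed

lemma pm_e1_e2:
  assumes M: "perfect_matching V E ends M" and "e1 \<in> M" shows "e2 \<in> M"
proof (rule ccontr)
  assume n2: "e2 \<notin> M"
  have F: "\<forall>e\<in>E. card (ends e) = 2 \<and> ends e \<subseteq> V" using Eedges .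
  have ME: "M \<subseteq> E" using M unfolding perfect_matching_def by auto
  have "mate M ends ` W \<subseteq> U - ends e1"
  proof
    fix y assume "y \<in> mate M ends ` W"
    then obtain z where z: "z \<in> W" "y = mate M ends z" by blast
    have zV: "z \<in> V" using z UW by auto
    have en: "ends (eat M ends z) = {z, mate M ends z}" using pm_mate[OF M F zV] by auto
    have eM: "eat M ends z \<in> M" using pm_eat[OF M zV] by auto
    have "eat M ends z \<noteq> e1" using e1U en z UW by auto
    moreover have "eat M ends z \<noteq> e2" using eM n2 by auto
    ultimately have eH: "eat M ends z \<in> E - {e1, e2}" using eM ME by auto
    then have yU: "y \<in> U" using Hside' en z by blast
    have "y \<notin> ends e1"
    proof
      assume "y \<in> ends e1"
      then have "eat M ends y = e1" using pm_eat_eq[OF M _ assms(2)] yU UW by auto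
      moreover have "eat M ends y = eat M ends z" using pm_eat_mate[OF M F zV] z by simp
      ultimately show False using \<open>eat M ends z \<noteq> e1\<close> by simp
    qed
    then show "y \<in> U - ends e1" using yU by auto
  qed
  moreover have "inj_on (mate M ends) W" using pm_mate_inj[OF M F] UW by (auto intro: inj_on_subset)
  ultimately have "card W \<le> card (U - ends e1)" using finU by (auto intro: card_inj_on_le)
  also have "\<dots> = card U - card (ends e1)" using e1U finU by (meson card_Diff_subset finite_subset)
  also have "\<dots> = card U - 2" using Eedges e1 by simp
  finally have "card W \<le> card U - 2" .
  moreover have "card U \<ge> 2" using e1U Eedges e1 finU by (metis card_mono)
  ultimately show False using cardUW by linarith
qed

lemma swap: "nb V E ends e2 e1 W U"
  unfolding nb_def using graph brick e1 e2 ne H_mc H_bip e1U e2W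
  by (auto simp: insert_commute is_bipartition_def)

lemma pm_e2_e1:
  assumes M: "perfect_matching V E ends M" and "e2 \<in> M" shows "e1 \<in> M"
  using nb.pm_e1_e2[OF swap] assms .

lemma typeI_forced:
  assumes eH: "e \<in> E - {e1, e2}" and nr: "\<not> matching_covered V (E - {e}) ends"
    and rH: "matching_covered V (E - {e1, e2} - {e}) ends"
    and M: "perfect_matching V E ends M" and "e1 \<in> M"
  shows "e \<in> M"
proof (rule ccontr)
  assume eM: "e \<notin> M"
  have "e2 \<in> M" using pm_e1_e2[OF M] assms by simp
  have M': "perfect_matching V (E - {e}) ends M" using M eM unfolding perfect_matching_def by auto
  have "matching_covered V (E - {e}) ends"
    unfolding matching_covered_def
  proof (intro conjI ballI)
    show "connected_graph V (E - {e}) ends" using rH conn_mono unfolding matching_covered_def by blast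
    show "2 \<le> card V" using cardV2 .
  next
    fix f assume f: "f \<in> E - {e}"
    show "admissible V (E - {e}) ends f"
    proof (cases "f \<in> {e1, e2}")
      case True
      then show ?thesis using M' \<open>e1 \<in> M\<close> \<open>e2 \<in> M\<close> unfolding admissible_def by blast
    next
      case False
      then have "admissible V (E - {e1, e2} - {e}) ends f" using rH f unfolding matching_covered_def by auto
      then show ?thesis unfolding admissible_def using pm_mono by blast
    qed
  qed
  then show False using nr by simp
qed

lemma part1:
  assumes "a \<in> E - {e1, e2}" "\<not> matching_covered V (E - {a}) ends" "matching_covered V (E - {e1, e2} - {a}) ends"
    and "b \<in> E - {e1, e2}" "\<not> matching_covered V (E - {b}) ends" "matching_covered V (E - {e1, e2} - {b}) ends"
    and "v \<in> V" "v \<in> ends a" "v \<in> ends b"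
  shows "a = b"
proof -
  obtain M where M: "perfect_matching V E ends M" "e1 \<in> M" using brick_adm e1 by blast
  have "a \<in> M" "b \<in> M" using typeI_forced M assms by blast+
  then show ?thesis using M(1) assms(7-9) unfolding perfect_matching_def by blast
qed

end



context nb begin

definition NH :: "'v set \<Rightarrow> 'v set" where
  "NH Y = {u \<in> U. \<exists>f\<in>E - {e1, e2}. u \<in> ends f \<and> ends f \<inter> Y \<noteq> {}}"

lemma finNH: "finite (NH Y)" unfolding NH_def using finU by auto

lemma Hends:
  assumes "f \<in> E - {e1, e2}" "u \<in> ends f" "u \<in> U" "w \<in> ends f" "w \<in> W"
  shows "ends f = {u, w}"
proof -
  have "card (ends f) = 2" using assms(1) Eedges by auto
  then obtain p q where pq: "ends f = {p, q}" "p \<noteq> q" by (meson card2_obtain)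
  have "u \<noteq> w" using assms UW by auto
  then show ?thesis using pq assms(2,4) by auto
qed

lemma strict_hall:
  assumes Y: "Y \<subseteq> W" "Y \<noteq> {}" "Y \<noteq> W"
  shows "card Y + 1 \<le> card (NH Y)"
proof (rule ccontr)
  assume "\<not> card Y + 1 \<le> card (NH Y)"
  then have lt: "card (NH Y) \<le> card Y" by simp
  obtain s where s: "s \<in> Y" using Y by blast
  obtain t where t: "t \<in> W" "t \<notin> Y" using Y by blast
  have "(s, t) \<in> (adj_rel (E - {e1, e2}) ends)\<^sup>*"
    using H_mc s t Y UW unfolding matching_covered_def connected_graph_def by blast
  moreover have "t \<notin> Y \<union> NH Y" using t UW unfolding NH_def by auto
  ultimately obtain g p q where g: "g \<in> E - {e1, e2}" "ends g = {p, q}" "p \<in> Y \<union> NH Y" "q \<notin> Y \<union> NH Y"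
    using cross[of s t _ ends "Y \<union> NH Y"] s by blast
  have pNH: "p \<in> NH Y"
  proof (rule ccontr)
    assume "p \<notin> NH Y"
    then have "p \<in> Y" using g by auto
    then have "q \<in> U" using Hside'[OF g(1,2)] Y by auto
    then have "q \<in> NH Y" unfolding NH_def using g \<open>p \<in> Y\<close> by auto
    then show False using g by auto
  qed
  then have pU: "p \<in> U" unfolding NH_def by auto
  have qW: "q \<in> W" "q \<notin> Y" using Hside[OF g(1,2) pU] g by auto
  obtain M where M: "perfect_matching V (E - {e1, e2}) ends M" "g \<in> M"
    using H_mc g unfolding matching_covered_def admissible_def by blast
  have F: "\<forall>e\<in>E - {e1, e2}. card (ends e) = 2 \<and> ends e \<subseteq> V" using Fedges by blast
  have MH: "M \<subseteq> E - {e1, e2}" using M unfolding perfect_matching_def by auto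
  have pV: "p \<in> V" using pU UW by auto
  have eatp: "eat M ends p = g" using pm_eat_eq[OF M(1) pV M(2)] g by auto
  have "mate M ends ` Y \<subseteq> NH Y - {p}"
  proof
    fix y assume "y \<in> mate M ends ` Y"
    then obtain z where z: "z \<in> Y" "y = mate M ends z" by blast
    have zW: "z \<in> W" using z Y by auto
    have zV: "z \<in> V" using zW UW by auto
    have en: "ends (eat M ends z) = {z, mate M ends z}" using pm_mate[OF M(1) F zV] by auto
    have eH: "eat M ends z \<in> E - {e1, e2}" using pm_eat[OF M(1) zV] MH by auto
    have yU: "y \<in> U" using Hside'[OF eH en zW] z by simp
    have "y \<in> NH Y" unfolding NH_def using yU eH en z by auto
    moreover have "y \<noteq> p"
    proof
      assume "y = p"
      then have "eat M ends z = g" using pm_eat_mate[OF M(1) F zV] eatp z by simp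
      then have "z \<in> {p, q}" using en g by auto
      moreover have "z \<noteq> p" using zW pU UW by auto
      ultimately show False using z qW by auto
    qed
    ultimately show "y \<in> NH Y - {p}" by auto
  qed
  moreover have "inj_on (mate M ends) Y" using pm_mate_inj[OF M(1) F] Y UW by (auto intro: inj_on_subset)
  ultimately have "card Y \<le> card (NH Y - {p})" using finNH by (auto intro: card_inj_on_le)
  also have "\<dots> = card (NH Y) - 1" using pNH finNH by simp
  finally have "card Y \<le> card (NH Y) - 1" .
  moreover have "card Y > 0" using Y finW by (meson card_gt_0_iff finite_subset)
  ultimately show False using lt by linarith
qed

lemma e2_meets:
  assumes Y: "Y \<subseteq> W" "Y \<noteq> {}" and v: "v \<in> U" "v \<in> NH Y" and c: "card (NH Y) \<le> card Y + 1"
  shows "ends e2 \<inter> Y \<noteq> {}"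
proof -
  have cY: "card Y > 0" using Y finW by (meson card_gt_0_iff finite_subset)
  obtain x' where x': "x' \<in> U" "x' \<noteq> v" "card (NH Y - {v, x'}) < card Y"
  proof (cases "\<exists>x. x \<in> NH Y - {v}")
    case True
    then obtain x where x: "x \<in> NH Y" "x \<noteq> v" by blast
    have "card (NH Y - {v, x}) = card (NH Y) - 2" using x v finNH
      by (subst card_Diff_subset) auto
    then have "card (NH Y - {v, x}) < card Y" using c cY x v finNH
      by linarith
    moreover have "x \<in> U" using x unfolding NH_def by auto
    ultimately show ?thesis using that x by blast
  next
    case False
    have "card (ends e1) = 2" using Eedges e1 by auto
    then obtain p q where pq: "ends e1 = {p, q}" "p \<noteq> q" by (meson card2_obtain)
    obtain x where x: "x \<in> ends e1" "x \<noteq> v" using pq by auto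
    have e: "NH Y - {v, x} = {}" using False by auto
    have "card (NH Y - {v, x}) < card Y" using cY by (simp only: e card.empty)
    moreover have "x \<in> U" using x e1U by auto
    ultimately show ?thesis using that[of x] x by blast
  qed
  define V' where "V' = V - {v, x'}"
  have vV: "v \<in> V" "x' \<in> V" using v x' UW by auto
  obtain M where M: "perfect_matching V' (del_edges E ends {v, x'}) ends M"
    using brick vV x' unfolding brick_def V'_def by metis
  have F: "\<forall>e\<in>del_edges E ends {v, x'}. card (ends e) = 2 \<and> ends e \<subseteq> V'"
    using Eedges unfolding del_edges_def V'_def by auto
  have MF: "M \<subseteq> E" using M unfolding perfect_matching_def del_edges_def by auto
  show ?thesis
  proof
    assume n2: "ends e2 \<inter> Y = {}"
    have "mate M ends ` Y \<subseteq> NH Y - {v, x'}"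
    proof
      fix y assume "y \<in> mate M ends ` Y"
      then obtain z where z: "z \<in> Y" "y = mate M ends z" by blast
      have zW: "z \<in> W" using z Y by auto
      have zV: "z \<in> V'" using zW UW v x' unfolding V'_def by auto
      have en: "ends (eat M ends z) = {z, mate M ends z}" "mate M ends z \<in> V'"
        using pm_mate[OF M F zV] by auto
      have eM: "eat M ends z \<in> E" using pm_eat[OF M zV] MF by auto
      have "eat M ends z \<noteq> e1" using en e1U zW UW by auto
      moreover have "eat M ends z \<noteq> e2" using en n2 z by auto
      ultimately have eH: "eat M ends z \<in> E - {e1, e2}" using eM by auto
      have yU: "y \<in> U" using Hside'[OF eH en(1) zW] z by simp
      have "y \<in> NH Y" unfolding NH_def using yU eH en z by auto
      then show "y \<in> NH Y - {v, x'}" using en(2) z unfolding V'_def by auto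
    qed
    moreover have "inj_on (mate M ends) Y"
      using pm_mate_inj[OF M F] Y UW v x' unfolding V'_def by (auto intro: inj_on_subset)
    ultimately have "card Y \<le> card (NH Y - {v, x'})" using finNH by (auto intro: card_inj_on_le)
    then show False using x' by linarith
  qed
qed

lemma NH_Un: "NH (Y1 \<union> Y2) = NH Y1 \<union> NH Y2" unfolding NH_def by blast

lemma disj:
  assumes Y: "Y1 \<subseteq> W" "Y2 \<subseteq> W" "Y1 \<union> Y2 \<noteq> W"
    and v: "v \<in> NH Y1" "v \<in> NH Y2" "v \<notin> NH (Y1 \<inter> Y2)"
    and c: "card (NH Y1) \<le> card Y1 + 1" "card (NH Y2) \<le> card Y2 + 1"
  shows "Y1 \<inter> Y2 = {}"
proof (rule ccontr)
  assume I: "Y1 \<inter> Y2 \<noteq> {}"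
  have f: "finite Y1" "finite Y2" using Y finW finite_subset by auto
  have "Y1 \<inter> Y2 \<noteq> W" using Y by blast
  then have s1: "card (Y1 \<inter> Y2) + 1 \<le> card (NH (Y1 \<inter> Y2))" using strict_hall[of "Y1 \<inter> Y2"] I Y by blast
  have "Y1 \<union> Y2 \<subseteq> W" "Y1 \<union> Y2 \<noteq> {}" using Y I by auto
  then have s2: "card (Y1 \<union> Y2) + 1 \<le> card (NH (Y1 \<union> Y2))" using strict_hall[of "Y1 \<union> Y2"] Y by blast
  have "NH (Y1 \<inter> Y2) \<subseteq> (NH Y1 \<inter> NH Y2) - {v}" using v unfolding NH_def by blast
  then have "card (NH (Y1 \<inter> Y2)) \<le> card ((NH Y1 \<inter> NH Y2) - {v})" using finNH by (auto intro: card_mono)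
  also have "\<dots> = card (NH Y1 \<inter> NH Y2) - 1" using v finNH by simp
  finally have i: "card (NH (Y1 \<inter> Y2)) \<le> card (NH Y1 \<inter> NH Y2) - 1" .
  have u: "card (NH Y1) + card (NH Y2) = card (NH Y1 \<union> NH Y2) + card (NH Y1 \<inter> NH Y2)"
    using card_Un_Int finNH by blast
  have y: "card Y1 + card Y2 = card (Y1 \<union> Y2) + card (Y1 \<inter> Y2)" using card_Un_Int f by blast
  have "card (NH Y1 \<inter> NH Y2) \<ge> 1" using v finNH by (metis IntI card_0_eq empty_iff finite_Int less_one not_le)
  then show False using s1 s2 i u y c NH_Un by simp
qed

end



context nb begin

lemma barrier_disc:
  assumes v: "v \<in> U" and a: "a \<in> E - {e1, e2}" "ends a = {v, wa}" "wa \<in> W"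
    and nc: "\<not> connected_graph V (E - {e1, e2} - {a}) ends"
  shows "\<exists>Y. Y \<subseteq> W \<and> wa \<in> Y \<and> (\<forall>f\<in>E - {e1, e2} - {a}. v \<in> ends f \<longrightarrow> ends f \<inter> Y = {})
           \<and> card (NH Y) \<le> card Y + 1"
proof -
  define R where "R = adj_rel (E - {e1, e2} - {a}) ends"
  have symR: "sym (R\<^sup>*)" unfolding R_def using adj_sym sym_rtrancl by blast
  have nvC: "(wa, v) \<notin> R\<^sup>*"
  proof
    assume wv: "(wa, v) \<in> R\<^sup>*"
    then have vw: "(v, wa) \<in> R\<^sup>*" using symR by (meson symD)
    have "adj_rel (E - {e1, e2}) ends \<subseteq> R\<^sup>*"
    proof
      fix pq assume "pq \<in> adj_rel (E - {e1, e2}) ends"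
      then obtain p q f where pq: "pq = (p, q)" "f \<in> E - {e1, e2}" "ends f = {p, q}"
        unfolding adj_rel_def by blast
      show "pq \<in> R\<^sup>*"
      proof (cases "f = a")
        case True
        have "card (ends f) = 2" using pq Eedges by auto
        then have "p \<noteq> q" using pq by auto
        then have "(p, q) = (v, wa) \<or> (p, q) = (wa, v)" using True pq a by (auto simp: doubleton_eq_iff)
        then show ?thesis using wv vw pq by auto
      next
        case False
        then have "(p, q) \<in> R" unfolding R_def adj_rel_def using pq by auto
        then show ?thesis using pq by auto
      qed
    qed
    then have "(adj_rel (E - {e1, e2}) ends)\<^sup>* \<subseteq> R\<^sup>*" by (rule rtrancl_subset_rtrancl)
    then have "connected_graph V (E - {e1, e2} - {a}) ends"
      using H_mc unfolding matching_covered_def connected_graph_def R_def by blast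
    then show False using nc by simp
  qed
  define C where "C = {z. (wa, z) \<in> R\<^sup>*}"
  define Y where "Y = C \<inter> W"
  have vC: "v \<notin> C" using nvC unfolding C_def by simp
  have waY: "wa \<in> Y" unfolding Y_def C_def using a by simp
  have Rstep: "z \<in> C" if "w \<in> C" "f \<in> E - {e1, e2} - {a}" "ends f = {w, z}" for w z f
  proof -
    have "(w, z) \<in> R" unfolding R_def adj_rel_def using that by auto
    then show ?thesis using that(1) unfolding C_def by (meson mem_Collect_eq rtrancl.rtrancl_into_rtrancl)
  qed
  have noedge: "\<forall>f\<in>E - {e1, e2} - {a}. v \<in> ends f \<longrightarrow> ends f \<inter> Y = {}"
  proof (intro ballI impI)
    fix f assume f: "f \<in> E - {e1, e2} - {a}" "v \<in> ends f"
    show "ends f \<inter> Y = {}"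
    proof (rule ccontr)
      assume "ends f \<inter> Y \<noteq> {}"
      then obtain w where w: "w \<in> ends f" "w \<in> Y" by blast
      have "ends f = {v, w}" using Hends[of f v w] f w v unfolding Y_def by auto
      then have "ends f = {w, v}" by auto
      then have "v \<in> C" using Rstep[of w f v] f w unfolding Y_def by auto
      then show False using vC by simp
    qed
  qed
  have NHsub: "NH Y \<subseteq> insert v (C \<inter> U)"
  proof
    fix u assume "u \<in> NH Y"
    then obtain f w where u: "u \<in> U" "f \<in> E - {e1, e2}" "u \<in> ends f" "w \<in> ends f" "w \<in> Y"
      unfolding NH_def by blast
    have ef: "ends f = {u, w}" using Hends[of f u w] u unfolding Y_def by auto
    show "u \<in> insert v (C \<inter> U)"
    proof (cases "f = a")
      case True
      then have "u \<in> {v, wa}" using a u by auto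
      moreover have "u \<noteq> wa" using u a UW by auto
      ultimately show ?thesis by auto
    next
      case False
      have "ends f = {w, u}" using ef by auto
      then have "u \<in> C" using Rstep[of w f u] u False unfolding Y_def by auto
      then show ?thesis using u by auto
    qed
  qed
  obtain M where M: "perfect_matching V (E - {e1, e2}) ends M" using H_pm by blast
  have F: "\<forall>e\<in>E - {e1, e2}. card (ends e) = 2 \<and> ends e \<subseteq> V" using Fedges by blast
  have MH: "M \<subseteq> E - {e1, e2}" using M unfolding perfect_matching_def by auto
  have "mate M ends ` (C \<inter> U) \<subseteq> Y"
  proof
    fix y assume "y \<in> mate M ends ` (C \<inter> U)"
    then obtain z where z: "z \<in> C" "z \<in> U" "y = mate M ends z" by blast
    have zV: "z \<in> V" using z UW by auto
    have en: "ends (eat M ends z) = {z, mate M ends z}" using pm_mate[OF M F zV] by auto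
    have eH: "eat M ends z \<in> E - {e1, e2}" using pm_eat[OF M zV] MH by auto
    have yW: "y \<in> W" using Hside[OF eH en] z by simp
    have "eat M ends z \<noteq> a"
    proof
      assume "eat M ends z = a"
      then have "z \<in> {v, wa}" using en a by auto
      moreover have "z \<noteq> wa" using z a UW by auto
      ultimately show False using z vC by auto
    qed
    then have "y \<in> C" using Rstep[of z "eat M ends z" y] z en eH by auto
    then show "y \<in> Y" using yW unfolding Y_def by auto
  qed
  moreover have "inj_on (mate M ends) (C \<inter> U)" using pm_mate_inj[OF M F] UW by (auto intro: inj_on_subset)
  moreover have "finite Y" unfolding Y_def using finW by auto
  ultimately have "card (C \<inter> U) \<le> card Y" by (auto intro: card_inj_on_le)
  moreover have "card (NH Y) \<le> card (insert v (C \<inter> U))" using NHsub finU by (auto intro: card_mono)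
  moreover have "card (insert v (C \<inter> U)) \<le> card (C \<inter> U) + 1" using finU by (simp add: card_insert_if)
  ultimately have "card (NH Y) \<le> card Y + 1" by linarith
  moreover have "Y \<subseteq> W" unfolding Y_def by auto
  ultimately show ?thesis using waY noedge by blast
qed

end



context nb begin

lemma Hxy:
  assumes "g \<in> E - {e1, e2}"
  obtains x y where "ends g = {x, y}" "x \<in> U" "y \<in> W"
proof -
  have c: "card (ends g) = 2" "card (ends g \<inter> U) = 1" "ends g \<subseteq> V"
    using assms Eedges H_bip unfolding is_bipartition_def by auto
  obtain p q where pq: "ends g = {p, q}" "p \<noteq> q" using c(1) by (meson card2_obtain)
  have "ends g \<inter> U \<noteq> {}" using c(2) by auto
  then have "p \<in> U \<or> q \<in> U" using pq by auto
  then show ?thesis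
  proof
    assume "p \<in> U" then show ?thesis using that Hside[OF assms pq(1)] pq by blast
  next
    assume "q \<in> U"
    moreover have "ends g = {q, p}" using pq by auto
    ultimately show ?thesis using that Hside[OF assms] by blast
  qed
qed

lemma hall_pm:
  assumes a: "a \<in> E - {e1, e2}" and g: "g \<in> E - {e1, e2} - {a}" "ends g = {x, y}" "x \<in> U" "y \<in> W"
    and f: "inj_on f (W - {y})" "\<forall>w\<in>W - {y}. f w \<in> {u \<in> U - {x}. \<exists>h\<in>E - {e1, e2} - {a}. ends h = {u, w}}"
  shows "admissible V (E - {e1, e2} - {a}) ends g"
proof -
  define A where "A = W - {y}"
  define B where "B = U - {x}"
  define H' where "H' = E - {e1, e2} - {a}"
  define ed where "ed w = (SOME e. e \<in> H' \<and> ends e = {f w, w})" for w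
  have ed: "ed w \<in> H' \<and> ends (ed w) = {f w, w} \<and> f w \<in> B" if "w \<in> A" for w
  proof -
    have "f w \<in> B" "\<exists>e. e \<in> H' \<and> ends e = {f w, w}" using f that unfolding A_def B_def H'_def by auto
    then show ?thesis unfolding ed_def by (metis (mono_tags, lifting) someI_ex)
  qed
  have fA: "f ` A = B"
  proof (rule card_subset_eq)
    show "finite B" unfolding B_def using finU by auto
    show "f ` A \<subseteq> B" using ed by auto
    have "card (f ` A) = card A" using f unfolding A_def by (simp add: card_image)
    also have "\<dots> = card W - 1" unfolding A_def using g finW by simp
    also have "\<dots> = card B" unfolding B_def using g finU cardUW by simp
    finally show "card (f ` A) = card B" .
  qed
  define M where "M = insert g (ed ` A)"
  have "perfect_matching V H' ends M"
    unfolding perfect_matching_def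
  proof (intro conjI ballI)
    show "M \<subseteq> H'" unfolding M_def using g ed unfolding H'_def by blast
  next
    fix z assume zV: "z \<in> V"
    show "\<exists>!e. e \<in> M \<and> z \<in> ends e"
    proof (cases "z \<in> {x, y}")
      case True
      show ?thesis
      proof (rule ex1I[of _ g])
        show "g \<in> M \<and> z \<in> ends g" unfolding M_def using True g by auto
      next
        fix e assume e: "e \<in> M \<and> z \<in> ends e"
        show "e = g"
        proof (rule ccontr)
          assume "e \<noteq> g"
          then obtain w where w: "w \<in> A" "e = ed w" using e unfolding M_def by auto
          then have "z \<in> {f w, w}" using ed e by auto
          moreover have "f w \<in> B" using ed w by auto
          ultimately show False using True w g UW unfolding A_def B_def by auto
        qed
      qed
    next
      case False
      then have zn: "z \<noteq> x" "z \<noteq> y" by auto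
      show ?thesis
      proof (cases "z \<in> W")
        case True
        then have zA: "z \<in> A" unfolding A_def using zn by auto
        show ?thesis
        proof (rule ex1I[of _ "ed z"])
          show "ed z \<in> M \<and> z \<in> ends (ed z)" unfolding M_def using ed zA by auto
        next
          fix e assume e: "e \<in> M \<and> z \<in> ends e"
          then have "e \<noteq> g" using g zn by auto
          then obtain w where w: "w \<in> A" "e = ed w" using e unfolding M_def by auto
          then have "z \<in> {f w, w}" using ed e by auto
          moreover have "f w \<noteq> z" using ed w True UW unfolding B_def by auto
          ultimately show "e = ed z" using w by auto
        qed
      next
        case False
        then have "z \<in> B" using zV UW zn unfolding B_def by auto
        then obtain w0 where w0: "w0 \<in> A" "z = f w0" using fA by auto
        show ?thesis
        proof (rule ex1I[of _ "ed w0"])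
          show "ed w0 \<in> M \<and> z \<in> ends (ed w0)" unfolding M_def using ed w0 by auto
        next
          fix e assume e: "e \<in> M \<and> z \<in> ends e"
          then have "e \<noteq> g" using g zn by auto
          then obtain w where w: "w \<in> A" "e = ed w" using e unfolding M_def by auto
          then have "z \<in> {f w, w}" using ed e by auto
          moreover have "z \<noteq> w" using False w unfolding A_def by auto
          ultimately have "f w = f w0" using w0 by auto
          then have "w = w0" using f w w0 unfolding A_def by (auto dest: inj_onD)
          then show "e = ed w0" using w by simp
        qed
      qed
    qed
  qed
  then show ?thesis unfolding admissible_def M_def H'_def by blast
qed

lemma barrier_adm:
  assumes v: "v \<in> U" and a: "a \<in> E - {e1, e2}" "ends a = {v, wa}" "wa \<in> W"
    and g: "g \<in> E - {e1, e2} - {a}" and na: "\<not> admissible V (E - {e1, e2} - {a}) ends g"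
  shows "\<exists>Y. Y \<subseteq> W \<and> wa \<in> Y \<and> (\<forall>f\<in>E - {e1, e2} - {a}. v \<in> ends f \<longrightarrow> ends f \<inter> Y = {})
           \<and> card (NH Y) \<le> card Y + 1"
proof -
  obtain x y where xy: "ends g = {x, y}" "x \<in> U" "y \<in> W" using Hxy g by blast
  define Nb where "Nb w = {u \<in> U - {x}. \<exists>h\<in>E - {e1, e2} - {a}. ends h = {u, w}}" for w
  have "\<exists>S\<subseteq>W - {y}. card (\<Union>(Nb ` S)) < card S"
  proof (rule ccontr)
    assume "\<not> ?thesis"
    then have "\<forall>S\<subseteq>W - {y}. card S \<le> card (\<Union>(Nb ` S))" by (auto simp: not_less)
    moreover have "finite (W - {y})" using finW by auto
    moreover have "\<forall>w\<in>W - {y}. finite (Nb w)" unfolding Nb_def using finU by auto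
    ultimately have "\<exists>f. inj_on f (W - {y}) \<and> (\<forall>w\<in>W - {y}. f w \<in> Nb w)"
      using hall_aux[of "W - {y}" Nb] by simp
    then obtain f where "inj_on f (W - {y})" "\<forall>w\<in>W - {y}. f w \<in> Nb w" by blast
    then have "admissible V (E - {e1, e2} - {a}) ends g"
      using hall_pm[OF a(1) g xy, of f] unfolding Nb_def by simp
    then show False using na by simp
  qed
  then obtain Y where Y: "Y \<subseteq> W - {y}" "card (\<Union>(Nb ` Y)) < card Y" by blast
  define K where "K = \<Union>(Nb ` Y)"
  have "K \<subseteq> U" unfolding K_def Nb_def by auto
  then have finK: "finite K" using finU finite_subset by blast
  have Y1: "Y \<subseteq> W" "Y \<noteq> {}" "Y \<noteq> W" using Y xy by auto
  have sh: "card Y + 1 \<le> card (NH Y)" using strict_hall[OF Y1] .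
  have NHcase: "u \<in> K \<or> u = x \<or> (u = v \<and> wa \<in> Y)" if uN: "u \<in> NH Y" for u
  proof -
    obtain f w where u: "u \<in> U" "f \<in> E - {e1, e2}" "u \<in> ends f" "w \<in> ends f" "w \<in> Y"
      using uN unfolding NH_def by blast
    have wW: "w \<in> W" using u Y1 by auto
    have ef: "ends f = {u, w}" using Hends[OF u(2,3,1,4) wW] .
    show ?thesis
    proof (cases "f = a")
      case True
      then have e: "{u, w} = {v, wa}" using ef a by simp
      have "u \<noteq> wa" using u a UW by auto
      moreover have "u \<in> {v, wa}" using e by blast
      ultimately have "u = v" by blast
      have "w \<noteq> v" using wW v UW by auto
      moreover have "w \<in> {v, wa}" using e by blast
      ultimately have "w = wa" by blast
      then show ?thesis using \<open>u = v\<close> u by blast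
    next
      case False
      then have "f \<in> E - {e1, e2} - {a}" using u by blast
      then have "u = x \<or> u \<in> Nb w" unfolding Nb_def using u ef by blast
      then show ?thesis unfolding K_def using u by blast
    qed
  qed
  have waY: "wa \<in> Y"
  proof (rule ccontr)
    assume "wa \<notin> Y"
    then have "NH Y \<subseteq> K \<union> {x}" using NHcase by blast
    then have "card (NH Y) \<le> card (K \<union> {x})" using finK by (auto intro: card_mono)
    also have "\<dots> \<le> card K + 1" using finK by (simp add: card_insert_if)
    finally show False using sh Y(2) unfolding K_def by linarith
  qed
  have noedge: "\<forall>f\<in>E - {e1, e2} - {a}. v \<in> ends f \<longrightarrow> ends f \<inter> Y = {}"
  proof (intro ballI impI)
    fix f assume f: "f \<in> E - {e1, e2} - {a}" "v \<in> ends f"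
    show "ends f \<inter> Y = {}"
    proof (rule ccontr)
      assume "ends f \<inter> Y \<noteq> {}"
      then obtain w where w: "w \<in> ends f" "w \<in> Y" by blast
      have "ends f = {v, w}" using Hends[of f v w] f w v Y1 by auto
      then have "v = x \<or> v \<in> Nb w" unfolding Nb_def using v f by auto
      then have "v \<in> K \<union> {x}" unfolding K_def using w by auto
      then have "NH Y \<subseteq> K \<union> {x}" using NHcase by blast
      then have "card (NH Y) \<le> card (K \<union> {x})" using finK by (auto intro: card_mono)
      also have "\<dots> \<le> card K + 1" using finK by (simp add: card_insert_if)
      finally show False using sh Y(2) unfolding K_def by linarith
    qed
  qed
  have "NH Y \<subseteq> K \<union> {x, v}" using NHcase by blast
  then have "card (NH Y) \<le> card (K \<union> {x, v})" using finK by (auto intro: card_mono)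
  also have "\<dots> \<le> card K + card {x, v}" by (rule card_Un_le)
  also have "\<dots> \<le> card K + 2" by (cases "x = v") auto
  finally have "card (NH Y) \<le> card Y + 1" using Y(2) unfolding K_def by linarith
  then show ?thesis using Y1 waY noedge by blast
qed

end



context nb begin

lemma barrier:
  assumes v: "v \<in> U" and a: "a \<in> E - {e1, e2}" "v \<in> ends a"
    and nm: "\<not> matching_covered V (E - {e1, e2} - {a}) ends"
  shows "\<exists>wa Y. ends a = {v, wa} \<and> Y \<subseteq> W \<and> wa \<in> Y
           \<and> (\<forall>f\<in>E - {e1, e2} - {a}. v \<in> ends f \<longrightarrow> ends f \<inter> Y = {})
           \<and> card (NH Y) \<le> card Y + 1"
proof -
  have "card (ends a) = 2" using a Eedges by auto
  then obtain p q where pq: "ends a = {p, q}" "p \<noteq> q" by (meson card2_obtain)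
  obtain wa where wa: "ends a = {v, wa}" using pq a(2) by auto
  have waW: "wa \<in> W" using Hside[OF a(1) wa v] .
  have "\<not> connected_graph V (E - {e1, e2} - {a}) ends \<or>
        (\<exists>g\<in>E - {e1, e2} - {a}. \<not> admissible V (E - {e1, e2} - {a}) ends g)"
    using nm cardV2 unfolding matching_covered_def by blast
  then have "\<exists>Y. Y \<subseteq> W \<and> wa \<in> Y \<and> (\<forall>f\<in>E - {e1, e2} - {a}. v \<in> ends f \<longrightarrow> ends f \<inter> Y = {})
           \<and> card (NH Y) \<le> card Y + 1"
  proof
    assume "\<not> connected_graph V (E - {e1, e2} - {a}) ends"
    then show ?thesis using barrier_disc[OF v a(1) wa waW] by blast
  next
    assume "\<exists>g\<in>E - {e1, e2} - {a}. \<not> admissible V (E - {e1, e2} - {a}) ends g"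
    then obtain g where "g \<in> E - {e1, e2} - {a}" "\<not> admissible V (E - {e1, e2} - {a}) ends g" by blast
    then show ?thesis using barrier_adm[OF v a(1) wa waW] by blast
  qed
  then show ?thesis using wa by blast
qed

lemma pair_disj:
  assumes v: "v \<in> U"
    and a1: "a1 \<in> E - {e1, e2}" "ends a1 = {v, w1}" "Y1 \<subseteq> W" "w1 \<in> Y1"
      "\<forall>f\<in>E - {e1, e2} - {a1}. v \<in> ends f \<longrightarrow> ends f \<inter> Y1 = {}" "card (NH Y1) \<le> card Y1 + 1"
    and a2: "a2 \<in> E - {e1, e2}" "ends a2 = {v, w2}" "Y2 \<subseteq> W" "w2 \<in> Y2"
      "\<forall>f\<in>E - {e1, e2} - {a2}. v \<in> ends f \<longrightarrow> ends f \<inter> Y2 = {}" "card (NH Y2) \<le> card Y2 + 1"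
    and ne: "a1 \<noteq> a2" and w3: "w3 \<in> W" "w3 \<notin> Y1" "w3 \<notin> Y2"
  shows "Y1 \<inter> Y2 = {}"
proof (rule disj)
  show "Y1 \<subseteq> W" "Y2 \<subseteq> W" using a1 a2 by auto
  show "Y1 \<union> Y2 \<noteq> W" using w3 by auto
  show "v \<in> NH Y1" unfolding NH_def using v a1 by auto
  show "v \<in> NH Y2" unfolding NH_def using v a2 by auto
  show "card (NH Y1) \<le> card Y1 + 1" "card (NH Y2) \<le> card Y2 + 1" using a1 a2 by auto
  have w1n: "w1 \<notin> Y2"
  proof
    assume "w1 \<in> Y2"
    moreover have "a1 \<in> E - {e1, e2} - {a2}" using a1 ne by auto
    ultimately show False using a2(5) a1(2) by auto
  qed
  show "v \<notin> NH (Y1 \<inter> Y2)"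
  proof
    assume "v \<in> NH (Y1 \<inter> Y2)"
    then obtain f where f: "f \<in> E - {e1, e2}" "v \<in> ends f" "ends f \<inter> (Y1 \<inter> Y2) \<noteq> {}"
      unfolding NH_def by blast
    show False
    proof (cases "f = a1")
      case True
      then have "ends f \<inter> (Y1 \<inter> Y2) \<subseteq> {v, w1} \<inter> Y2" using a1 by auto
      moreover have "v \<notin> Y2" using v a2 UW by auto
      ultimately show False using f w1n by auto
    next
      case False
      then show False using a1(5) f by auto
    qed
  qed
qed

lemma three:
  assumes v: "v \<in> U"
    and a: "a \<in> E - {e1, e2}" "v \<in> ends a" "\<not> matching_covered V (E - {e1, e2} - {a}) ends"
    and b: "b \<in> E - {e1, e2}" "v \<in> ends b" "\<not> matching_covered V (E - {e1, e2} - {b}) ends"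
    and c: "c \<in> E - {e1, e2}" "v \<in> ends c" "\<not> matching_covered V (E - {e1, e2} - {c}) ends"
    and d: "a \<noteq> b" "a \<noteq> c" "b \<noteq> c"
  shows False
proof -
  obtain wa Ya where A: "ends a = {v, wa}" "Ya \<subseteq> W" "wa \<in> Ya"
      "\<forall>f\<in>E - {e1, e2} - {a}. v \<in> ends f \<longrightarrow> ends f \<inter> Ya = {}" "card (NH Ya) \<le> card Ya + 1"
    using barrier[OF v a] by blast
  obtain wb Yb where B: "ends b = {v, wb}" "Yb \<subseteq> W" "wb \<in> Yb"
      "\<forall>f\<in>E - {e1, e2} - {b}. v \<in> ends f \<longrightarrow> ends f \<inter> Yb = {}" "card (NH Yb) \<le> card Yb + 1"
    using barrier[OF v b] by blast
  obtain wc Yc where C: "ends c = {v, wc}" "Yc \<subseteq> W" "wc \<in> Yc"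
      "\<forall>f\<in>E - {e1, e2} - {c}. v \<in> ends f \<longrightarrow> ends f \<inter> Yc = {}" "card (NH Yc) \<le> card Yc + 1"
    using barrier[OF v c] by blast
  have W3: "wa \<in> W" "wb \<in> W" "wc \<in> W" using A B C by auto
  have n1: "wb \<notin> Ya" "wc \<notin> Ya" using A(4) b c d B(1) C(1) by auto
  have n2: "wa \<notin> Yb" "wc \<notin> Yb" using B(4) a c d A(1) C(1) by auto
  have n3: "wa \<notin> Yc" "wb \<notin> Yc" using C(4) a b d A(1) B(1) by auto
  have D1: "Ya \<inter> Yb = {}" by (rule pair_disj[OF v a(1) A b(1) B d(1) W3(3) n1(2) n2(2)])
  have D2: "Ya \<inter> Yc = {}" by (rule pair_disj[OF v a(1) A c(1) C d(2) W3(2) n1(1) n3(2)])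
  have D3: "Yb \<inter> Yc = {}" by (rule pair_disj[OF v b(1) B c(1) C d(3) W3(1) n2(1) n3(1)])
  have vN: "v \<in> NH Ya" "v \<in> NH Yb" "v \<in> NH Yc" unfolding NH_def using v a b c A B C by auto
  have ne: "Ya \<noteq> {}" "Yb \<noteq> {}" "Yc \<noteq> {}" using A B C by auto
  have m1: "ends e2 \<inter> Ya \<noteq> {}" by (rule e2_meets[OF A(2) ne(1) v vN(1) A(5)])
  have m2: "ends e2 \<inter> Yb \<noteq> {}" by (rule e2_meets[OF B(2) ne(2) v vN(2) B(5)])
  have m3: "ends e2 \<inter> Yc \<noteq> {}" by (rule e2_meets[OF C(2) ne(3) v vN(3) C(5)])
  have "card (ends e2) = 2" using e2 Eedges by auto
  then obtain p q where pq: "ends e2 = {p, q}" by (meson card2_obtain)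
  have "p \<in> Ya \<or> q \<in> Ya" "p \<in> Yb \<or> q \<in> Yb" "p \<in> Yc \<or> q \<in> Yc" using m1 m2 m3 pq by auto
  then show False using D1 D2 D3 by blast
qed

lemma part2U:
  assumes v: "v \<in> U"
  shows "card {e \<in> E - {e1, e2}. v \<in> ends e \<and> \<not> matching_covered V (E - {e1, e2} - {e}) ends} \<le> 2"
proof (rule ccontr)
  let ?T = "{e \<in> E - {e1, e2}. v \<in> ends e \<and> \<not> matching_covered V (E - {e1, e2} - {e}) ends}"
  assume "\<not> card ?T \<le> 2"
  then have "3 \<le> card ?T" by simp
  then obtain T where T: "T \<subseteq> ?T" "card T = 3" by (rule obtain_subset_with_card_n)
  then have "\<exists>x y z. T = {x, y, z} \<and> x \<noteq> y \<and> y \<noteq> z \<and> x \<noteq> z" using card_3_iff by blast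
  then obtain a b c where abc: "T = {a, b, c}" "a \<noteq> b" "b \<noteq> c" "a \<noteq> c" by blast
  have m: "a \<in> ?T" "b \<in> ?T" "c \<in> ?T" using abc(1) T(1) by auto
  show False
    by (rule three[OF v, of a b c]) (use m abc in auto)
qed

end

lemma card_le1: "\<forall>a\<in>S. \<forall>b\<in>S. a = b \<Longrightarrow> finite S \<Longrightarrow> card S \<le> 1"
  by (simp add: card_le_Suc0_iff_eq)

theorem mainTheorem7:
  fixes V :: "'v set" and E :: "'e set" and ends :: "'e \<Rightarrow> 'v set"
    and e1 e2 :: 'e and U W :: "'v set"
  assumes graph: "is_graph V E ends"
    and brick: "brick V E ends"
    and e1: "e1 \<in> E" and e2: "e2 \<in> E" and ne: "e1 \<noteq> e2"
    and H_mc: "matching_covered V (E - {e1, e2}) ends"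
    and H_bip: "is_bipartition V (E - {e1, e2}) ends U W"
    and e1U: "ends e1 \<subseteq> U" and e2W: "ends e2 \<subseteq> W"
  shows "\<forall>v\<in>V.
     card {e \<in> E - {e1, e2}. v \<in> ends e \<and> nonremovable V E ends e
             \<and> removable V (E - {e1, e2}) ends e} \<le> 1 \<and>
     card {e \<in> E - {e1, e2}. v \<in> ends e \<and> nonremovable V E ends e
             \<and> nonremovable V (E - {e1, e2}) ends e} \<le> 2"
proof
  fix v assume vV: "v \<in> V"
  interpret nb V E ends e1 e2 U W using assms by (simp add: nb_def)
  have finS: "finite (E - {e1, e2})" using finE by auto
  let ?S1 = "{e \<in> E - {e1, e2}. v \<in> ends e \<and> nonremovable V E ends e \<and> removable V (E - {e1, e2}) ends e}"
  have "\<forall>a\<in>?S1. \<forall>b\<in>?S1. a = b"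
  proof (intro ballI)
    fix a b assume a: "a \<in> ?S1" and b: "b \<in> ?S1"
    have A: "a \<in> E - {e1, e2}" "\<not> matching_covered V (E - {a}) ends" "matching_covered V (E - {e1, e2} - {a}) ends" "v \<in> ends a"
      using a unfolding nonremovable_def removable_def by auto
    have B: "b \<in> E - {e1, e2}" "\<not> matching_covered V (E - {b}) ends" "matching_covered V (E - {e1, e2} - {b}) ends" "v \<in> ends b"
      using b unfolding nonremovable_def removable_def by auto
    from part1[OF A(1-3) B(1-3) vV A(4) B(4)] show "a = b" .
  qed
  moreover have "?S1 \<subseteq> E - {e1, e2}" by blast
  then have "finite ?S1" using finS by (rule finite_subset)
  ultimately have c1: "card ?S1 \<le> 1" by (rule card_le1)
  let ?S2 = "{e \<in> E - {e1, e2}. v \<in> ends e \<and> nonremovable V E ends e \<and> nonremovable V (E - {e1, e2}) ends e}"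
  let ?T = "{e \<in> E - {e1, e2}. v \<in> ends e \<and> \<not> matching_covered V (E - {e1, e2} - {e}) ends}"
  have sub: "?S2 \<subseteq> ?T" unfolding nonremovable_def by blast
  have "card ?T \<le> 2"
  proof (cases "v \<in> U")
    case True then show ?thesis by (rule part2U)
  next
    case False
    then have "v \<in> W" using vV UW by auto
    then have "card {e \<in> E - {e2, e1}. v \<in> ends e \<and> \<not> matching_covered V (E - {e2, e1} - {e}) ends} \<le> 2"
      by (rule nb.part2U[OF swap])
    moreover have eq: "{e2, e1} = {e1, e2}" by blast
    ultimately show ?thesis by (simp only: eq)
  qed
  moreover have "?T \<subseteq> E - {e1, e2}" by blast
  then have "finite ?T" using finS by (rule finite_subset)
  then have "card ?S2 \<le> card ?T" using sub by (rule card_mono)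
  ultimately show "card ?S1 \<le> 1 \<and> card ?S2 \<le> 2" using c1 by linarith
qed


end
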